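(* Let $p\in\mathbb N$ and $c$ a constant, and consider the modified Bogoyavlensky lattice $$v'_j=(c-v_j)v_j\,(v_{j+1}\cdots v_{j+p}-v_{j-1}\cdots v_{j-p}),\qquad j\in\mathbb Z.$$ Let constants $b_j,d_j$, $j\in\mathbb Z$, satisfy $b_{j+p}=b_j+1$ and $d_{j+p+1}=d_j+c$, and define $$G_j=t(c-v_j)\Bigl(\sum_{s=0}^p v_{j-p+s}\cdots v_{j+s}-c\sum_{s=1}^p v_{j-p+s}\cdots v_{j+s-1}\Bigr)+b_jv_j-d_j.$$ Then the constraint $G_j=0$ (for all $j\in\mathbb Z$) is consistent with the lattice: the total derivative $\frac{d}{dt}G_j$ computed by virtue of the lattice equations (including the explicit dependence on $t$) vanishes whenever $G_k=0$ for all $k\in\mathbb Z$, so that the set of solutions satisfying all constraints $G_j=0$ is invariant under the flow.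
   Context: $f'=df/dt$. *)

theory Defs
  imports Complex_Main
begin

definition mbog_rhs :: "nat \<Rightarrow> real \<Rightarrow> (int \<Rightarrow> real) \<Rightarrow> int \<Rightarrow> real" where
  "mbog_rhs p c v j =
     (c - v j) * v j * ((\<Prod>i=1..p. v (j + int i)) - (\<Prod>i=1..p. v (j - int i)))"

definition G_constr :: "nat \<Rightarrow> real \<Rightarrow> (int \<Rightarrow> real) \<Rightarrow> (int \<Rightarrow> real) \<Rightarrow> int \<Rightarrow> real
    \<Rightarrow> (int \<Rightarrow> real) \<Rightarrow> real" where
  "G_constr p c b d j t v =
     t * (c - v j) *
       ((\<Sum>s=0..p. \<Prod>i=0..p. v (j - int p + int s + int i))
        - c * (\<Sum>s=1..p. \<Prod>i=0..<p. v (j - int p + int s + int i)))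
     + b j * v j - d j"

text \<open>Total derivative of G_j by virtue of the lattice, at the point (t, v):
  derivative of s \<mapsto> G_j(t + s, v + s F(v)) at s = 0 (G_j depends on finitely many v_k
  polynomially, so this equals \<partial>_t G_j + \<Sum>_k \<partial>G_j/\<partial>v_k F_k(v)).\<close>

end

theory Submission
  imports Defs
begin


lemma isum_last: "(a::int) \<le> b + 1 \<Longrightarrow> sum f {a..b+1} = sum f {a..b} + (f (b+1) :: real)"
proof -
  assume "a \<le> b + 1"
  then have "{a..b+1} = insert (b+1) {a..b}" by auto
  then show ?thesis by simp
qed

lemma isum_last': "(a::int) \<le> b \<Longrightarrow> sum f {a..b} = sum f {a..b-1} + (f b :: real)"
  using isum_last[of a "b-1" f] by simp

lemma isum_first: "(a::int) \<le> b \<Longrightarrow> sum f {a..b} = f a + (sum f {a+1..b} :: real)"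
proof -
  assume "a \<le> b"
  then have "{a..b} = insert a {a+1..b}" by auto
  then show ?thesis by simp
qed

lemma isum_tele: "(a::int) \<le> b + 1 \<Longrightarrow> (\<Sum>m\<in>{a..b}. f m - f (m-1)) = f b - (f (a-1) :: real)"
proof -
  assume "a \<le> b + 1"
  then have "a - 1 \<le> b" by simp
  then show ?thesis
  proof (induction b rule: int_ge_induct)
    case base then show ?case by simp
  next
    case (step i)
    then show ?case using isum_last[of a i "\<lambda>m. f m - f (m-1)"] by simp
  qed
qed

lemma isum_shift: "sum f {a..(b::int)} = (\<Sum>m\<in>{a-k..b-k}. (f (m+k) :: real))"
  by (rule sum.reindex_bij_witness[where i="\<lambda>m. m+k" and j="\<lambda>m. m-k"]) auto

lemma nsum_to_isum: "(\<Sum>s\<in>{0..n}. f (a + int s)) = (\<Sum>m\<in>{a..a+int n}. (f m :: real))"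
  by (rule sum.reindex_bij_witness[where i="\<lambda>m. nat (m-a)" and j="\<lambda>s. a + int s"]) auto

lemma nsum_to_isum1: "(\<Sum>s\<in>{1..n}. f (a + int s)) = (\<Sum>m\<in>{a+1..a+int n}. (f m :: real))"
  by (rule sum.reindex_bij_witness[where i="\<lambda>m. nat (m-a)" and j="\<lambda>s. a + int s"]) auto

definition Pr :: "(int \<Rightarrow> real) \<Rightarrow> int \<Rightarrow> nat \<Rightarrow> real" where
  "Pr v m n = (\<Prod>i<n. v (m + int i))"

lemma Pr_add: "Pr v m (a+b) = Pr v m a * Pr v (m + int a) b"
  unfolding Pr_def
proof (induction b)
  case 0 then show ?case by simp
next
  case (Suc b) then show ?case by (simp add: algebra_simps)
qed

lemma Pr_1: "Pr v m (Suc 0) = v m" by (simp add: Pr_def)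

definition Ww :: "nat \<Rightarrow> (int \<Rightarrow> real) \<Rightarrow> int \<Rightarrow> real" where
  "Ww p v m = (\<Prod>i=0..p. v (m + int i))"
definition Uw :: "nat \<Rightarrow> (int \<Rightarrow> real) \<Rightarrow> int \<Rightarrow> real" where
  "Uw p v m = (\<Prod>i=0..<p. v (m + int i))"

lemma Ww_Pr: "Ww p v m = Pr v m (Suc p)"
  unfolding Ww_def Pr_def using atLeast0AtMost lessThan_Suc_atMost by metis
lemma Uw_Pr: "Uw p v m = Pr v m p"
  unfolding Uw_def Pr_def using atLeast0LessThan by metis

lemma W_right: "Ww p v m = Uw p v m * v (m + int p)"
  using Pr_add[of v m p 1] by (simp add: Ww_Pr Uw_Pr Pr_1)
lemma W_left: "Ww p v m = v m * Uw p v (m + 1)"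
  using Pr_add[of v m 1 p] by (simp add: Ww_Pr Uw_Pr Pr_1)
lemma coinc1: "Ww p v m * Uw p v (m + int p + 1) = Uw p v m * Ww p v (m + int p)"
  using Pr_add[of v m "Suc p" p] Pr_add[of v m p "Suc p"] by (simp add: Ww_Pr Uw_Pr add.commute add.left_commute)
lemma coinc2: "Ww p v m * Uw p v (m - int p) = Ww p v (m - int p) * Uw p v (m + 1)"
  using Pr_add[of v "m - int p" "Suc p" p] Pr_add[of v "m - int p" p "Suc p"]
  by (simp add: Ww_Pr Uw_Pr algebra_simps)

lemma Rprod: "(\<Prod>i=1..p. v (j + int i)) = Uw p v (j+1)"
  unfolding Uw_def
  by (rule prod.reindex_bij_witness[where i="\<lambda>i. i + 1" and j="\<lambda>i. i - 1"]) auto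
lemma Lprod: "(\<Prod>i=1..p. v (j - int i)) = Uw p v (j - int p)"
  unfolding Uw_def
  by (rule prod.reindex_bij_witness[where i="\<lambda>i. p - i" and j="\<lambda>i. p - i"]) auto



definition hh :: "nat \<Rightarrow> real \<Rightarrow> (int \<Rightarrow> real) \<Rightarrow> int \<Rightarrow> real" where
  "hh p c v k = (c - v k) * (Uw p v (k+1) - Uw p v (k - int p))"
definition TT :: "nat \<Rightarrow> real \<Rightarrow> (int \<Rightarrow> real) \<Rightarrow> int \<Rightarrow> real" where
  "TT p c v n = (\<Sum>a\<in>{n - int p..n}. Ww p v a) - c * (\<Sum>a\<in>{n - int p + 1..n}. Uw p v a)"
definition ph :: "nat \<Rightarrow> real \<Rightarrow> (int \<Rightarrow> real) \<Rightarrow> int \<Rightarrow> real" where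
  "ph p c v k = c * (\<Sum>l\<in>{k - int p..k}. Uw p v l) - (\<Sum>l\<in>{k - int p..k-1}. Ww p v l)"

lemma hh_alt: "hh p c v k = c * (Uw p v (k+1) - Uw p v (k - int p)) - (Ww p v k - Ww p v (k - int p))"
  using W_left[of p v k] W_right[of p v "k - int p"] by (simp add: hh_def algebra_simps)

lemma hh_phi: assumes "1 \<le> p" shows "hh p c v k = ph p c v (k+1) - ph p c v k"
proof -
  let ?U = "Uw p v" and ?W = "Ww p v"
  have e1: "(\<Sum>l\<in>{k + 1 - int p..k + 1}. ?U l) = (\<Sum>l\<in>{k - int p + 1..k}. ?U l) + ?U (k+1)"
    using isum_last[of "k+1-int p" k ?U] by (simp add: algebra_simps)
  have e2: "(\<Sum>l\<in>{k - int p..k}. ?U l) = ?U (k - int p) + (\<Sum>l\<in>{k - int p + 1..k}. ?U l)"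
    using isum_first[of "k-int p" k ?U] by simp
  have e3: "(\<Sum>l\<in>{k + 1 - int p..k}. ?W l) = (\<Sum>l\<in>{k - int p + 1..k - 1}. ?W l) + ?W k"
    using isum_last'[of "k+1-int p" k ?W] assms by (simp add: algebra_simps)
  have e4: "(\<Sum>l\<in>{k - int p..k - 1}. ?W l) = ?W (k - int p) + (\<Sum>l\<in>{k - int p + 1..k - 1}. ?W l)"
    using isum_first[of "k-int p" "k - 1" ?W] assms by simp
  show ?thesis unfolding hh_alt ph_def using e1 e2 e3 e4 by (simp add: algebra_simps)
qed

lemma HW: assumes "1 \<le> p"
  shows "(\<Sum>i=0..p. hh p c v (m + int i)) = ph p c v (m + int p + 1) - ph p c v m"
proof -
  have "(\<Sum>i=0..p. hh p c v (m + int i)) = (\<Sum>i<Suc p. ph p c v (m + int (Suc i)) - ph p c v (m + int i))"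
    using hh_phi[OF assms] by (simp add: atLeast0AtMost lessThan_Suc_atMost ac_simps)
  also have "\<dots> = ph p c v (m + int (Suc p)) - ph p c v (m + int 0)"
    by (rule sum_lessThan_telescope)
  finally show ?thesis by (simp add: ac_simps)
qed

lemma HU: assumes "1 \<le> p"
  shows "(\<Sum>i=0..<p. hh p c v (m + int i)) = ph p c v (m + int p) - ph p c v m"
proof -
  have "(\<Sum>i=0..<p. hh p c v (m + int i)) = (\<Sum>i<p. ph p c v (m + int (Suc i)) - ph p c v (m + int i))"
    using hh_phi[OF assms] by (simp add: atLeast0LessThan ac_simps)
  also have "\<dots> = ph p c v (m + int p) - ph p c v (m + int 0)"
    by (rule sum_lessThan_telescope)
  finally show ?thesis by simp
qed

lemma phiW: "ph p c v (m + int p + 1) - ph p c v m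
   = TT p c v m - TT p c v (m + int p) + c * (Uw p v (m + int p + 1) - Uw p v (m - int p))"
proof -
  let ?U = "Uw p v" and ?W = "Ww p v"
  have e1: "(\<Sum>l\<in>{m+1..m + int p + 1}. ?U l) = (\<Sum>l\<in>{m+1..m + int p}. ?U l) + ?U (m + int p + 1)"
    using isum_last[of "m+1" "m + int p" ?U] by simp
  have e2: "(\<Sum>l\<in>{m - int p..m}. ?U l) = ?U (m - int p) + (\<Sum>l\<in>{m - int p + 1..m}. ?U l)"
    using isum_first[of "m-int p" m ?U] by simp
  have e3: "(\<Sum>l\<in>{m - int p..m}. ?W l) = (\<Sum>l\<in>{m - int p..m - 1}. ?W l) + ?W m"
    using isum_last'[of "m-int p" m ?W] by simp
  have e4: "(\<Sum>l\<in>{m..m + int p}. ?W l) = ?W m + (\<Sum>l\<in>{m + 1..m + int p}. ?W l)"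
    using isum_first[of m "m + int p" ?W] by simp
  show ?thesis unfolding TT_def ph_def using e1 e2 e3 e4 by (simp add: algebra_simps)
qed

lemma phiU: "ph p c v (m + int p) - ph p c v m
   = TT p c v (m - 1) - TT p c v (m + int p) + Ww p v (m + int p) - Ww p v (m - int p - 1)"
proof -
  let ?U = "Uw p v" and ?W = "Ww p v"
  have e1: "(\<Sum>l\<in>{m..m + int p}. ?U l) = ?U m + (\<Sum>l\<in>{m+1..m + int p}. ?U l)"
    using isum_first[of m "m + int p" ?U] by simp
  have e2: "(\<Sum>l\<in>{m - int p..m}. ?U l) = (\<Sum>l\<in>{m - int p..m - 1}. ?U l) + ?U m"
    using isum_last'[of "m-int p" m ?U] by simp
  have e3: "(\<Sum>l\<in>{m..m + int p}. ?W l) = (\<Sum>l\<in>{m..m + int p - 1}. ?W l) + ?W (m + int p)"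
    using isum_last'[of m "m + int p" ?W] by simp
  have e4: "(\<Sum>l\<in>{m - int p - 1..m - 1}. ?W l) = ?W (m - int p - 1) + (\<Sum>l\<in>{m - int p..m - 1}. ?W l)"
    using isum_first[of "m - int p - 1" "m - 1" ?W] by simp
  show ?thesis unfolding TT_def ph_def using e1 e2 e3 e4 by (simp add: algebra_simps)
qed



definition DT :: "nat \<Rightarrow> real \<Rightarrow> (int \<Rightarrow> real) \<Rightarrow> int \<Rightarrow> real" where
  "DT p c v j = (\<Sum>m\<in>{j - int p..j}. Ww p v m * (\<Sum>i=0..p. hh p c v (m + int i)))
     - c * (\<Sum>m\<in>{j - int p + 1..j}. Uw p v m * (\<Sum>i=0..<p. hh p c v (m + int i)))"

lemma core:
  assumes p1: "1 \<le> p"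
  shows "DT p c v j = (Ww p v j - Ww p v (j - int p)) * TT p c v j
     + (\<Sum>m\<in>{j - int p + 1..j}. Uw p v m * ((c - v (m + int p)) * TT p c v (m + int p)
          - (c - v (m - 1)) * TT p c v (m - 1)))"
proof -
  let ?U = "Uw p v" and ?W = "Ww p v" and ?T = "TT p c v"
  define I where "I = {j - int p + 1..j}"
  define J where "J = {j - int p..j}"
  have S1: "DT p c v j = (\<Sum>m\<in>J. ?W m * (?T m - ?T (m + int p)))
       + c * (\<Sum>m\<in>J. ?W m * (?U (m + int p + 1) - ?U (m - int p)))
       + c * (\<Sum>m\<in>I. ?U m * (?T (m + int p) - ?T (m - 1)))
       - c * (\<Sum>m\<in>I. ?U m * (?W (m + int p) - ?W (m - int p - 1)))"
  proof -
    have a: "(\<Sum>m\<in>J. ?W m * (\<Sum>i=0..p. hh p c v (m + int i))) =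
        (\<Sum>m\<in>J. ?W m * (?T m - ?T (m + int p)) + c * (?W m * (?U (m + int p + 1) - ?U (m - int p))))"
      proof (rule sum.cong)
        fix m assume "m \<in> J"
        show "?W m * (\<Sum>i=0..p. hh p c v (m + int i)) = ?W m * (?T m - ?T (m + int p)) + c * (?W m * (?U (m + int p + 1) - ?U (m - int p)))"
          unfolding HW[OF p1] phiW by (simp add: algebra_simps)
      qed simp
    have b: "(\<Sum>m\<in>I. ?U m * (\<Sum>i=0..<p. hh p c v (m + int i))) =
        (\<Sum>m\<in>I. ?U m * (?W (m + int p) - ?W (m - int p - 1)) - ?U m * (?T (m + int p) - ?T (m - 1)))"
      by (rule sum.cong) (simp_all add: HU[OF p1] phiU algebra_simps)
    have a2: "(\<Sum>m\<in>J. ?W m * (?T m - ?T (m + int p)) + c * (?W m * (?U (m + int p + 1) - ?U (m - int p))))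
       = (\<Sum>m\<in>J. ?W m * (?T m - ?T (m + int p))) + c * (\<Sum>m\<in>J. ?W m * (?U (m + int p + 1) - ?U (m - int p)))"
      by (simp only: sum.distrib sum_distrib_left)
    have b2: "(\<Sum>m\<in>I. ?U m * (?W (m + int p) - ?W (m - int p - 1)) - ?U m * (?T (m + int p) - ?T (m - 1)))
       = (\<Sum>m\<in>I. ?U m * (?W (m + int p) - ?W (m - int p - 1))) - (\<Sum>m\<in>I. ?U m * (?T (m + int p) - ?T (m - 1)))"
      by (simp only: sum_subtractf)
    show ?thesis unfolding DT_def I_def[symmetric] J_def[symmetric] a b a2 b2
      by (simp only: right_diff_distrib)
  qed
  have S2: "(\<Sum>m\<in>I. ?U m * ((c - v (m + int p)) * ?T (m + int p) - (c - v (m - 1)) * ?T (m - 1)))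
      = c * (\<Sum>m\<in>I. ?U m * (?T (m + int p) - ?T (m - 1)))
        - (\<Sum>m\<in>I. ?W m * ?T (m + int p)) + (\<Sum>m\<in>I. ?W (m - 1) * ?T (m - 1))"
  proof -
    have "(\<Sum>m\<in>I. ?U m * ((c - v (m + int p)) * ?T (m + int p) - (c - v (m - 1)) * ?T (m - 1)))
       = (\<Sum>m\<in>I. c * (?U m * (?T (m + int p) - ?T (m - 1))) - ?W m * ?T (m + int p) + ?W (m - 1) * ?T (m - 1))"
    proof (rule sum.cong)
      fix m assume "m \<in> I"
      have "?W m = ?U m * v (m + int p)" by (rule W_right)
      moreover have "?W (m - 1) = v (m - 1) * ?U m" using W_left[of p v "m-1"] by simp
      ultimately show "?U m * ((c - v (m + int p)) * ?T (m + int p) - (c - v (m - 1)) * ?T (m - 1))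
         = c * (?U m * (?T (m + int p) - ?T (m - 1))) - ?W m * ?T (m + int p) + ?W (m - 1) * ?T (m - 1)"
        by (simp add: algebra_simps)
    qed simp
    then show ?thesis by (simp only: sum.distrib sum_subtractf sum_distrib_left)
  qed
  have sh: "(\<Sum>m\<in>I. ?W (m - 1) * ?T (m - 1)) = (\<Sum>m\<in>{j - int p..j - 1}. ?W m * ?T m)"
    unfolding I_def using isum_shift[of "\<lambda>m. ?W m * ?T m" "j - int p" "j - 1" "-1"] by simp
  have s3: "(\<Sum>m\<in>J. ?W m * ?T m) = (\<Sum>m\<in>{j - int p..j - 1}. ?W m * ?T m) + ?W j * ?T j"
    unfolding J_def using isum_last'[of "j - int p" j "\<lambda>m. ?W m * ?T m"] by simp
  have s4: "(\<Sum>m\<in>J. ?W m * ?T (m + int p)) = ?W (j - int p) * ?T j + (\<Sum>m\<in>I. ?W m * ?T (m + int p))"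
    unfolding J_def I_def using isum_first[of "j - int p" j "\<lambda>m. ?W m * ?T (m + int p)"] by simp
  have S3: "(\<Sum>m\<in>J. ?W m * (?U (m + int p + 1) - ?U (m - int p)))
          - (\<Sum>m\<in>I. ?U m * (?W (m + int p) - ?W (m - int p - 1))) = 0"
  proof -
    have z: "(\<Sum>m\<in>J. ?W m * (?U (m + int p + 1) - ?U (m - int p)))
        = (\<Sum>m\<in>J. ?U m * ?W (m + int p)) - (\<Sum>m\<in>J. ?W m * ?U (m - int p))"
      by (simp add: coinc1 sum_subtractf right_diff_distrib)
    have y: "(\<Sum>m\<in>I. ?U m * (?W (m + int p) - ?W (m - int p - 1)))
        = (\<Sum>m\<in>I. ?U m * ?W (m + int p)) - (\<Sum>m\<in>I. ?W (m - 1) * ?U (m - 1 - int p))"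
    proof -
      have "\<And>m. ?U m * ?W (m - int p - 1) = ?W (m - 1) * ?U (m - 1 - int p)"
      proof -
        fix m
        have "?W (m - 1) * ?U (m - 1 - int p) = ?W (m - 1 - int p) * ?U m"
          using coinc2[of p v "m-1"] by simp
        moreover have eq: "m - int p - 1 = m - 1 - int p" by simp
        ultimately show "?U m * ?W (m - int p - 1) = ?W (m - 1) * ?U (m - 1 - int p)"
          unfolding eq by (simp add: mult.commute)
      qed
      then show ?thesis by (simp add: sum_subtractf right_diff_distrib)
    qed
    have y2: "(\<Sum>m\<in>I. ?W (m - 1) * ?U (m - 1 - int p)) = (\<Sum>m\<in>{j - int p..j - 1}. ?W m * ?U (m - int p))"
      unfolding I_def using isum_shift[of "\<lambda>m. ?W m * ?U (m - int p)" "j - int p" "j - 1" "-1"] by simp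
    have z1: "(\<Sum>m\<in>J. ?U m * ?W (m + int p)) = ?U (j - int p) * ?W j + (\<Sum>m\<in>I. ?U m * ?W (m + int p))"
      unfolding J_def I_def using isum_first[of "j - int p" j "\<lambda>m. ?U m * ?W (m + int p)"] by simp
    have z2: "(\<Sum>m\<in>J. ?W m * ?U (m - int p)) = (\<Sum>m\<in>{j - int p..j - 1}. ?W m * ?U (m - int p)) + ?W j * ?U (j - int p)"
      unfolding J_def using isum_last'[of "j - int p" j "\<lambda>m. ?W m * ?U (m - int p)"] by simp
    show ?thesis unfolding z y y2 z1 z2 by simp
  qed
  have "DT p c v j - ((?W j - ?W (j - int p)) * ?T j
     + (\<Sum>m\<in>I. ?U m * ((c - v (m + int p)) * ?T (m + int p) - (c - v (m - 1)) * ?T (m - 1)))) = 0"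
  proof -
    have "(\<Sum>m\<in>J. ?W m * (?T m - ?T (m + int p))) = (\<Sum>m\<in>J. ?W m * ?T m) - (\<Sum>m\<in>J. ?W m * ?T (m + int p))"
      by (simp add: sum_subtractf right_diff_distrib)
    moreover have "c * (\<Sum>m\<in>J. ?W m * (?U (m + int p + 1) - ?U (m - int p)))
          - c * (\<Sum>m\<in>I. ?U m * (?W (m + int p) - ?W (m - int p - 1))) = 0"
      unfolding right_diff_distrib[symmetric] S3 by (rule mult_zero_right)
    moreover have "(?W j - ?W (j - int p)) * ?T j = ?W j * ?T j - ?W (j - int p) * ?T j"
      by (simp add: left_diff_distrib)
    ultimately show ?thesis unfolding S1 S2 sh using s3 s4 by linarith
  qed
  then show ?thesis unfolding I_def by simp
qed



lemma sumW_conv: "(\<Sum>s=0..p. \<Prod>i=0..p. v (k - int p + int s + int i)) = (\<Sum>m\<in>{k - int p..k}. Ww p v m)"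
  using nsum_to_isum[of "Ww p v" "k - int p" p] by (simp add: Ww_def)
lemma sumU_conv: "(\<Sum>s=1..p. \<Prod>i=0..<p. v (k - int p + int s + int i)) = (\<Sum>m\<in>{k - int p + 1..k}. Uw p v m)"
  using nsum_to_isum1[of "Uw p v" "k - int p" p] by (simp add: Uw_def)

lemma G_alt: "G_constr p c b d k t v = t * ((c - v k) * TT p c v k) + (b k * v k - d k)"
  unfolding G_constr_def TT_def sumW_conv sumU_conv by (simp add: algebra_simps)

lemma mbog_alt: "mbog_rhs p c v k = v k * hh p c v k"
  unfolding mbog_rhs_def hh_def Rprod Lprod by (simp add: algebra_simps)

lemma D1:
  assumes hb: "\<And>j. b (j + int p) = b j + 1"
      and hd: "\<And>j. d (j + int p + 1) = d j + c"
  shows "(c - v j) * TT p c v j + b j * (v j * hh p c v j)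
    = (c - v j) * (\<Sum>m\<in>{j - int p + 1..j}. Uw p v m *
        ((b (m + int p) * v (m + int p) - d (m + int p)) - (b (m - 1) * v (m - 1) - d (m - 1))))"
proof -
  let ?U = "Uw p v" and ?W = "Ww p v"
  define I where "I = {j - int p + 1..j}"
  have trm: "?U m * ((b (m + int p) * v (m + int p) - d (m + int p)) - (b (m - 1) * v (m - 1) - d (m - 1)))
     = (b (m + int p) * ?W m - b (m - 1 + int p) * ?W (m - 1)) + ?W (m - 1) - c * ?U m" for m
  proof -
    have w1: "?W m = ?U m * v (m + int p)" by (rule W_right)
    have w2: "?W (m - 1) = v (m - 1) * ?U m" using W_left[of p v "m-1"] by simp
    have h1: "d (m + int p) = d (m - 1) + c" using hd[of "m-1"] by simp
    have h2: "b (m - 1 + int p) = b (m - 1) + 1" using hb[of "m-1"] by simp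
    show ?thesis unfolding w1 w2 h1 h2 by (simp add: algebra_simps)
  qed
  have tel: "(\<Sum>m\<in>I. b (m + int p) * ?W m - b (m - 1 + int p) * ?W (m - 1))
      = b (j + int p) * ?W j - b (j - int p + int p) * ?W (j - int p)"
    unfolding I_def using isum_tele[of "j - int p + 1" j "\<lambda>m. b (m + int p) * ?W m"] by simp
  have sh: "(\<Sum>m\<in>I. ?W (m - 1)) = (\<Sum>m\<in>{j - int p..j - 1}. ?W m)"
    unfolding I_def using isum_shift[of "?W" "j - int p" "j - 1" "-1"] by simp
  have s3: "(\<Sum>m\<in>{j - int p..j}. ?W m) = (\<Sum>m\<in>{j - int p..j - 1}. ?W m) + ?W j"
    using isum_last'[of "j - int p" j ?W] by simp
  have hbj: "b (j + int p) = b j + 1" by (rule hb)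
  have vh: "v j * hh p c v j = (c - v j) * (?W j - ?W (j - int p))"
    using W_left[of p v j] W_right[of p v "j - int p"] by (simp add: hh_def algebra_simps)
  have "(\<Sum>m\<in>I. ?U m * ((b (m + int p) * v (m + int p) - d (m + int p)) - (b (m - 1) * v (m - 1) - d (m - 1))))
     = (\<Sum>m\<in>I. b (m + int p) * ?W m - b (m - 1 + int p) * ?W (m - 1)) + (\<Sum>m\<in>I. ?W (m - 1)) - c * (\<Sum>m\<in>I. ?U m)"
    unfolding trm by (simp only: sum.distrib sum_subtractf sum_distrib_left)
  also have "\<dots> = b j * (?W j - ?W (j - int p)) + TT p c v j"
    unfolding tel sh TT_def I_def[symmetric] s3 hbj by (simp add: algebra_simps)
  finally have SS: "(\<Sum>m\<in>I. ?U m * ((b (m + int p) * v (m + int p) - d (m + int p)) - (b (m - 1) * v (m - 1) - d (m - 1))))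
    = b j * (?W j - ?W (j - int p)) + TT p c v j" .
  show ?thesis unfolding I_def[symmetric] vh SS by (simp add: algebra_simps)
qed



lemma prod_deriv:
  fixes a g :: "'a \<Rightarrow> real"
  assumes "finite I"
  shows "((\<lambda>s. \<Prod>i\<in>I. a i + s * (a i * g i)) has_real_derivative (prod a I * sum g I)) (at 0)"
  using assms
proof (induction I rule: finite_induct)
  case empty then show ?case by simp
next
  case (insert x I)
  have d1: "((\<lambda>s. a x + s * (a x * g x)) has_real_derivative (a x * g x)) (at 0)"
    by (rule derivative_eq_intros | simp)+
  have "((\<lambda>s. (a x + s * (a x * g x)) * (\<Prod>i\<in>I. a i + s * (a i * g i))) has_real_derivative
      (a x * g x) * (\<Prod>i\<in>I. a i + 0 * (a i * g i)) + (prod a I * sum g I) * (a x + 0 * (a x * g x))) (at 0)"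
    by (rule DERIV_mult[OF d1 insert.IH])
  then show ?case using insert.hyps by (simp add: algebra_simps)
qed

lemma dW: "((\<lambda>s. \<Prod>i=0..p. v (m + int i) + s * (v (m + int i) * hh p c v (m + int i)))
   has_real_derivative (Ww p v m * (\<Sum>i=0..p. hh p c v (m + int i)))) (at 0)"
  unfolding Ww_def by (rule prod_deriv) simp
lemma dU: "((\<lambda>s. \<Prod>i=0..<p. v (m + int i) + s * (v (m + int i) * hh p c v (m + int i)))
   has_real_derivative (Uw p v m * (\<Sum>i=0..<p. hh p c v (m + int i)))) (at 0)"
  unfolding Uw_def by (rule prod_deriv) simp



theorem mainTheorem7:
  fixes p :: nat and c :: real and b d :: "int \<Rightarrow> real"
  assumes hb: "\<And>j. b (j + int p) = b j + 1"
      and hd: "\<And>j. d (j + int p + 1) = d j + c"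
  shows "\<forall>j t v. (\<forall>k. G_constr p c b d k t v = 0) \<longrightarrow>
           ((\<lambda>s. G_constr p c b d j (t + s) (\<lambda>k. v k + s * mbog_rhs p c v k))
              has_real_derivative 0) (at 0)"
proof (intro allI impI)
  fix j t v
  assume allG: "\<forall>k. G_constr p c b d k t v = 0"
  have p1: "1 \<le> p"
  proof (rule ccontr)
    assume "\<not> 1 \<le> p"
    then have "p = 0" by simp
    then show False using hb[of 0] by simp
  qed
  let ?U = "Uw p v" and ?W = "Ww p v" and ?T = "TT p c v" and ?h = "hh p c v"
  define X where "X = (\<lambda>s::real. (\<Sum>s'=0..p. \<Prod>i=0..p. v (j - int p + int s' + int i) + s * (v (j - int p + int s' + int i) * ?h (j - int p + int s' + int i)))
     - c * (\<Sum>s'=1..p. \<Prod>i=0..<p. v (j - int p + int s' + int i) + s * (v (j - int p + int s' + int i) * ?h (j - int p + int s' + int i))))"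
  have X0: "X 0 = ?T j"
    unfolding X_def TT_def using sumW_conv[where p=p and v=v and k=j] sumU_conv[where p=p and v=v and k=j] by simp
  have dX: "(X has_real_derivative DT p c v j) (at 0)"
  proof -
    have "(X has_real_derivative (\<Sum>s'=0..p. ?W (j - int p + int s') * (\<Sum>i=0..p. ?h (j - int p + int s' + int i)))
        - c * (\<Sum>s'=1..p. ?U (j - int p + int s') * (\<Sum>i=0..<p. ?h (j - int p + int s' + int i)))) (at 0)"
      unfolding X_def
      by (intro DERIV_diff DERIV_cmult DERIV_sum dW dU)
    moreover have "(\<Sum>s'=0..p. ?W (j - int p + int s') * (\<Sum>i=0..p. ?h (j - int p + int s' + int i)))
        = (\<Sum>m\<in>{j - int p..j}. ?W m * (\<Sum>i=0..p. ?h (m + int i)))"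
      using nsum_to_isum[of "\<lambda>m. ?W m * (\<Sum>i=0..p. ?h (m + int i))" "j - int p" p] by simp
    moreover have "(\<Sum>s'=1..p. ?U (j - int p + int s') * (\<Sum>i=0..<p. ?h (j - int p + int s' + int i)))
        = (\<Sum>m\<in>{j - int p + 1..j}. ?U m * (\<Sum>i=0..<p. ?h (m + int i)))"
      using nsum_to_isum1[of "\<lambda>m. ?U m * (\<Sum>i=0..<p. ?h (m + int i))" "j - int p" p] by simp
    ultimately show ?thesis unfolding DT_def by simp
  qed
  have d1: "((\<lambda>s::real. t + s) has_real_derivative 1) (at 0)"
    by (rule derivative_eq_intros | simp)+
  have d2: "((\<lambda>s. c - (v j + s * (v j * ?h j))) has_real_derivative (- (v j * ?h j))) (at 0)"
    by (rule derivative_eq_intros | simp)+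
  have d4: "((\<lambda>s. b j * (v j + s * (v j * ?h j))) has_real_derivative (b j * (v j * ?h j))) (at 0)"
    by (rule derivative_eq_intros | simp)+
  note dall = DERIV_diff[OF DERIV_add[OF DERIV_mult[OF DERIV_mult[OF d1 d2] dX] d4] DERIV_const[of "d j"]]
  have fun_eq: "(\<lambda>s. G_constr p c b d j (t + s) (\<lambda>k. v k + s * mbog_rhs p c v k))
     = (\<lambda>s. (t + s) * (c - (v j + s * (v j * ?h j))) * X s + b j * (v j + s * (v j * ?h j)) - d j)"
    unfolding G_constr_def X_def mbog_alt by simp
  have Bk: "b k * v k - d k = - (t * ((c - v k) * ?T k))" for k
    using allG G_alt[of p c b d k t v] by simp
  have vh: "v j * ?h j = (c - v j) * (?W j - ?W (j - int p))"
    using W_left[of p v j] W_right[of p v "j - int p"] by (simp add: hh_def algebra_simps)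
  define S where "S = (\<Sum>m\<in>{j - int p + 1..j}. ?U m * ((c - v (m + int p)) * ?T (m + int p) - (c - v (m - 1)) * ?T (m - 1)))"
  have D1': "(c - v j) * ?T j + b j * (v j * ?h j) = - (t * ((c - v j) * S))"
  proof -
    have "(\<Sum>m\<in>{j - int p + 1..j}. ?U m *
        ((b (m + int p) * v (m + int p) - d (m + int p)) - (b (m - 1) * v (m - 1) - d (m - 1))))
       = (\<Sum>m\<in>{j - int p + 1..j}. (- t) * (?U m * ((c - v (m + int p)) * ?T (m + int p) - (c - v (m - 1)) * ?T (m - 1))))"
      unfolding Bk by (rule sum.cong) (simp_all add: algebra_simps)
    also have "\<dots> = - t * S" unfolding S_def by (simp only: sum_distrib_left)
    finally show ?thesis using D1[where p=p and c=c and b=b and d=d and v=v and j=j, OF hb hd] by simp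
  qed
  have core': "DT p c v j = (?W j - ?W (j - int p)) * ?T j + S"
    unfolding S_def by (rule core[OF p1])
  show "((\<lambda>s. G_constr p c b d j (t + s) (\<lambda>k. v k + s * mbog_rhs p c v k)) has_real_derivative 0) (at 0)"
    unfolding fun_eq
  proof (rule DERIV_cong[OF dall])
    have "(1 * (c - (v j + 0 * (v j * ?h j))) + - (v j * ?h j) * (t + 0)) * X 0
        + DT p c v j * ((t + 0) * (c - (v j + 0 * (v j * ?h j)))) + b j * (v j * ?h j) - 0
      = ((c - v j) * ?T j + b j * (v j * ?h j)) + t * ((c - v j) * DT p c v j - (v j * ?h j) * ?T j)"
      unfolding X0 by (simp add: algebra_simps)
    also have "\<dots> = 0"
      unfolding D1' unfolding core' vh by (simp add: algebra_simps)
    finally show "(1 * (c - (v j + 0 * (v j * ?h j))) + - (v j * ?h j) * (t + 0)) * X 0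
        + DT p c v j * ((t + 0) * (c - (v j + 0 * (v j * ?h j)))) + b j * (v j * ?h j) - 0 = 0" .
  qed
qed

end
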